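(* For $n\in\mathbb N$, let $\sigma$ be the measure on $L_n$ given by $\sigma(j)=\sin\big(\frac{j\pi}{n+1}\big)$, $1\le j\le n$. Then $C^0_\sigma=1+2\cos\big(\frac{\pi}{n+1}\big)$.
   Context: $L_n$ is the path graph with vertices $\{1,\dots,n\}$ and edges $\{j,j+1\}$, with distance $|i-j|$. For a weight function $\mu:\{1,\dots,n\}\to(0,\infty)$, $\mu(A)=\sum_{v\in A}\mu(v)$, $B(x,r)=\{y:|x-y|\le r\}$ and $C^0_\mu=\max_{1\le x\le n}\mu(B(x,1))/\mu(x)$. *)

theory Defs
  imports "HOL-Analysis.Analysis"
begin

text \<open>The path graph L_n: vertex set {1..n}, graph distance |i - j|.\<close>

definition path_ball :: "nat \<Rightarrow> nat \<Rightarrow> nat \<Rightarrow> nat set" where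
  "path_ball n x r = {y \<in> {1..n}. \<bar>int x - int y\<bar> \<le> int r}"

definition meas :: "(nat \<Rightarrow> real) \<Rightarrow> nat set \<Rightarrow> real" where
  "meas \<mu> A = (\<Sum>v\<in>A. \<mu> v)"

definition C0 :: "nat \<Rightarrow> (nat \<Rightarrow> real) \<Rightarrow> real" where
  "C0 n \<mu> = Max ((\<lambda>x. meas \<mu> (path_ball n x 1) / \<mu> x) ` {1..n})"

end

theory Submission
  imports Defs
begin

theorem lemma3p3:
  fixes n :: nat
  assumes "n \<ge> 1"
  shows "C0 n (\<lambda>j. sin (real j * pi / real (n + 1))) = 1 + 2 * cos (pi / real (n + 1))"
proof -
  define a where "a = pi / real (n + 1)"
  define s where "s = (\<lambda>j::nat. sin (real j * pi / real (n + 1)))"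
  have s_eq: "s j = sin (real j * a)" for j by (simp add: s_def a_def)
  have s0: "s 0 = 0" by (simp add: s_def)
  have sn: "s (n+1) = 0" by (simp add: s_def)
  have key: "meas s (path_ball n x 1) / s x = 1 + 2 * cos a" if x: "x \<in> {1..n}" for x
  proof -
    have sub: "path_ball n x 1 \<subseteq> {x-1, x, x+1}"
      unfolding path_ball_def by auto
    have rest: "\<forall>i\<in>{x-1, x, x+1} - path_ball n x 1. s i = 0"
    proof
      fix i assume i: "i \<in> {x-1, x, x+1} - path_ball n x 1"
      then have "i = 0 \<or> i = n+1" using x unfolding path_ball_def by auto
      then show "s i = 0" using s0 sn by auto
    qed
    have "meas s (path_ball n x 1) = sum s {x-1, x, x+1}"
      unfolding meas_def by (rule sum.mono_neutral_left[OF _ sub rest]) auto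
    also have "\<dots> = s (x-1) + s x + s (x+1)" using x by (cases x) (auto simp: algebra_simps)
    also have "s (x-1) + s (x+1) = 2 * s x * cos a"
    proof -
      have e1: "real (x-1) * a = real x * a - a" using x by (simp add: of_nat_diff algebra_simps)
      have e2: "real (x+1) * a = real x * a + a" by (simp add: algebra_simps)
      show ?thesis unfolding s_eq e1 e2 sin_add sin_diff by simp
    qed
    then have "s (x-1) + s x + s (x+1) = s x * (1 + 2 * cos a)" by (simp add: algebra_simps)
    finally have m: "meas s (path_ball n x 1) = s x * (1 + 2 * cos a)" .
    have "0 < real x * a" using x by (simp add: a_def)
    moreover have "real x * a < pi"
    proof -
      have "pi * real x < pi * real (n+1)" using x by (intro mult_strict_left_mono) auto
      then show ?thesis by (simp add: a_def field_simps)
    qed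
    ultimately have "s x > 0" unfolding s_eq by (rule sin_gt_zero)
    then show ?thesis using m by simp
  qed
  have "(\<lambda>x. meas s (path_ball n x 1) / s x) ` {1..n} = {1 + 2 * cos a}"
    using key assms by (auto intro!: image_eqI[where x=1])
  then show ?thesis unfolding C0_def s_def[symmetric] a_def by simp
qed

end
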